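(* Let $\alpha\in(0,1)$ be an irrational number with bounded partial quotients, and let $s_\alpha$ be a Sturmian word of angle $\alpha$. Then there exists a positive constant $C$ such that for every sufficiently large $n$, $\sum_{m\le n}\mathit{ASF}_{s_\alpha}(m)\ge Cn^2$.
   Context: Alphabet $\{a,b\}$; $\{x\}=x-\lfloor x\rfloor$. For irrational $\alpha\in(0,1)$ and $\rho\in[0,1)$, the Sturmian word $s_{\alpha,\rho}=c_0c_1\cdots$ has $c_m=b$ if $\{\rho+m\alpha\}\in[0,1-\alpha)$ and $c_m=a$ otherwise (or with intervals $(0,1-\alpha]$ and $(1-\alpha,1]$); all these have the same set of factors, and $s_\alpha$ denotes any of them. $\alpha$ has bounded partial quotients if the sequence $(a_i)$ of its simple continued fraction expansion $\alpha=[a_0;a_1,a_2,\dots]$ is bounded. An abelian square is a word $v_1v_2$ with $v_1,v_2$ having the same numbers of each letter; $\mathit{ASF}_w(m)$ is the number of distinct factors of $w$ of length $m$ that are abelian squares. *)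

theory Defs
  imports Complex_Main
begin

datatype letter = a | b

fun cf_rem :: "real \<Rightarrow> nat \<Rightarrow> real" where
  "cf_rem x 0 = x"
| "cf_rem x (Suc k) = 1 / frac (cf_rem x k)"

definition partial_quotient :: "real \<Rightarrow> nat \<Rightarrow> int" where
  "partial_quotient x k = \<lfloor>cf_rem x k\<rfloor>"

definition bounded_partial_quotients :: "real \<Rightarrow> bool" where
  "bounded_partial_quotients x \<longleftrightarrow> (\<exists>B. \<forall>k. \<bar>partial_quotient x k\<bar> \<le> B)"

definition sturmian_lower :: "real \<Rightarrow> real \<Rightarrow> nat \<Rightarrow> letter" where
  "sturmian_lower \<alpha> \<rho> m =
     (if 0 \<le> frac (\<rho> + real m * \<alpha>) \<and> frac (\<rho> + real m * \<alpha>) < 1 - \<alpha> then b else a)"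

definition sturmian_upper :: "real \<Rightarrow> real \<Rightarrow> nat \<Rightarrow> letter" where
  "sturmian_upper \<alpha> \<rho> m =
     (if 0 < frac (\<rho> + real m * \<alpha>) \<and> frac (\<rho> + real m * \<alpha>) \<le> 1 - \<alpha> then b else a)"

definition is_factor :: "(nat \<Rightarrow> letter) \<Rightarrow> letter list \<Rightarrow> bool" where
  "is_factor w v \<longleftrightarrow> (\<exists>i. v = map (\<lambda>j. w (i + j)) [0..<length v])"

definition abelian_square :: "letter list \<Rightarrow> bool" where
  "abelian_square v \<longleftrightarrow>
     (\<exists>v1 v2. v = v1 @ v2 \<and> (\<forall>c. count_list v1 c = count_list v2 c))"

definition ASF :: "(nat \<Rightarrow> letter) \<Rightarrow> nat \<Rightarrow> nat" where
  "ASF w m = card {v. length v = m \<and> is_factor w v \<and> abelian_square v}"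

end

theory Submission
  imports Defs "HOL-Analysis.Kronecker_Approximation_Theorem"
begin


definition LL :: "real \<Rightarrow> real \<Rightarrow> letter" where
  "LL \<alpha> y = (if frac y < 1 - \<alpha> then b else a)"

lemma LL_step:
  assumes "0 < \<alpha>" "\<alpha> < 1"
  shows "\<lfloor>y + \<alpha>\<rfloor> = \<lfloor>y\<rfloor> + (if LL \<alpha> y = a then 1 else 0)"
proof -
  have e: "y + \<alpha> = (frac y + \<alpha>) + of_int \<lfloor>y\<rfloor>" by (simp add: frac_def)
  have "\<lfloor>frac y + \<alpha>\<rfloor> = (if LL \<alpha> y = a then 1 else 0)"
    using assms frac_ge_0[of y] frac_lt_1[of y] by (auto simp: LL_def floor_eq_iff)
  then show ?thesis by (subst e, subst floor_add_int[symmetric]) simp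
qed

lemma LL_count:
  assumes "0 < \<alpha>" "\<alpha> < 1"
  shows "int (count_list (map (\<lambda>j. LL \<alpha> (t + real j * \<alpha>)) [0..<m]) a) = \<lfloor>t + real m * \<alpha>\<rfloor> - \<lfloor>t\<rfloor>"
proof (induction m)
  case 0 then show ?case by simp
next
  case (Suc m)
  have "t + real (Suc m) * \<alpha> = (t + real m * \<alpha>) + \<alpha>" by (simp add: algebra_simps)
  have "\<lfloor>t + real (Suc m) * \<alpha>\<rfloor> = \<lfloor>t + real m * \<alpha>\<rfloor> + (if LL \<alpha> (t + real m * \<alpha>) = a then 1 else 0)"
    unfolding \<open>t + real (Suc m) * \<alpha> = (t + real m * \<alpha>) + \<alpha>\<close> by (rule LL_step[OF assms])
  then show ?case using Suc by auto
qed

lemma count_ab: "count_list v a + count_list v b = length v"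
proof (induction v)
  case (Cons x v) then show ?case by (cases x) auto
qed simp

lemma abelian_sq_intro:
  assumes "length v = 2*k" "count_list (take k v) a = count_list (drop k v) a"
  shows "abelian_square v"
proof -
  have l1: "length (take k v) = k" "length (drop k v) = k" using assms(1) by auto
  have "\<forall>c. count_list (take k v) c = count_list (drop k v) c"
  proof
    fix c show "count_list (take k v) c = count_list (drop k v) c"
    proof (cases c)
      case a then show ?thesis using assms(2) by simp
    next
      case b then show ?thesis using assms(2) count_ab[of "take k v"] count_ab[of "drop k v"] l1 by simp
    qed
  qed
  then show ?thesis unfolding abelian_square_def by (metis append_take_drop_id)
qed

lemma w_eq:
  assumes "w = sturmian_lower \<alpha> \<rho> \<or> w = sturmian_upper \<alpha> \<rho>"
    "frac (\<rho> + real n * \<alpha>) \<noteq> 0" "frac (\<rho> + real n * \<alpha>) \<noteq> 1 - \<alpha>"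
  shows "w n = LL \<alpha> (\<rho> + real n * \<alpha>)"
  using assms frac_ge_0[of "\<rho> + real n * \<alpha>"]
  by (auto simp: sturmian_lower_def sturmian_upper_def LL_def)

lemma irr_mult:
  assumes "\<alpha> \<notin> \<rat>" "n \<noteq> 0"
  shows "of_int n * \<alpha> \<notin> \<int>"
proof
  assume "of_int n * \<alpha> \<in> \<int>"
  then obtain m where "of_int n * \<alpha> = of_int m" by (auto elim: Ints_cases)
  then have "\<alpha> = of_int m / of_int n" using assms(2) by (simp add: field_simps)
  then show False using assms(1) by auto
qed

lemma floor_neg_sum:
  assumes "(x::real) \<notin> \<int>"
  shows "\<lfloor>x\<rfloor> + \<lfloor>- x\<rfloor> = -1"
proof -
  have "\<lceil>x\<rceil> = \<lfloor>x\<rfloor> + 1" using assms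
    by (auto simp: ceiling_altdef) (metis Ints_of_int)
  then show ?thesis by (simp add: floor_minus)
qed

lemma floor_diff_le:
  assumes "frac y \<le> frac (x::real)"
  shows "\<lfloor>x - y\<rfloor> = \<lfloor>x\<rfloor> - \<lfloor>y\<rfloor>"
proof -
  have "x - y = (frac x - frac y) + of_int (\<lfloor>x\<rfloor> - \<lfloor>y\<rfloor>)" by (simp add: frac_def)
  moreover have "\<lfloor>frac x - frac y\<rfloor> = 0"
  proof -
    have "0 \<le> frac x - frac y" "frac x - frac y < 1" using assms frac_ge_0[of y] frac_lt_1[of x] by linarith+
    then show ?thesis by (simp add: floor_eq_iff)
  qed
  ultimately show ?thesis by (metis floor_add_int add_0)
qed


lemma window:
  assumes "\<alpha> \<notin> \<rat>" "\<epsilon> > 0"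
  shows "\<exists>M>0. \<forall>x. \<exists>d<M. frac (x + real d * \<alpha>) < \<epsilon>"
proof -
  define e where "e = min \<epsilon> 1"
  have e: "0 < e" "e \<le> 1" "e \<le> \<epsilon>" using assms by (auto simp: e_def)
  obtain q :: nat where q: "q > 0" "\<bar>frac (real q * \<alpha>) - e/2\<bar> < e/2"
    using Kronecker_approx_1_explicit[OF assms(1), of "e/2" "e/2"] e by auto
  define \<theta> where "\<theta> = frac (real q * \<alpha>)"
  have h: "\<bar>\<theta> - e/2\<bar> < e/2" using q by (simp add: \<theta>_def)
  have th: "0 < \<theta>" "\<theta> < \<epsilon>" using h e by linarith+
  define M where "M = (nat \<lceil>1/\<theta>\<rceil> + 1) * q"
  have "M > 0" using q by (simp add: M_def)
  moreover have "\<exists>d<M. frac (x + real d * \<alpha>) < \<epsilon>" for x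
  proof -
    define m where "m = nat \<lceil>(1 - frac x)/\<theta>\<rceil>"
    have fx: "0 \<le> frac x" "frac x < 1" by (auto simp: frac_lt_1)
    have pos: "(1 - frac x)/\<theta> > 0" using fx th by simp
    have m1: "real m \<ge> (1 - frac x)/\<theta>" "real m < (1 - frac x)/\<theta> + 1"
      using pos unfolding m_def by (auto simp: ceiling_correct) linarith+
    have "(1 - frac x)/\<theta> \<le> 1/\<theta>" using fx th by (simp add: divide_right_mono)
    then have "m \<le> nat \<lceil>1/\<theta>\<rceil>" unfolding m_def by (intro nat_mono ceiling_mono)
    then have dM: "m * q < M" unfolding M_def using q(1)
      by (metis add_mult_distrib2 le_imp_less_Suc mult.commute mult_less_mono2 Suc_eq_plus1)
    have A: "1 \<le> frac x + real m * \<theta>" "frac x + real m * \<theta> < 1 + \<theta>"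
      using m1 th by (auto simp: field_simps)
    have "x + real (m*q) * \<alpha> = (frac x + real m * \<theta>) + of_int (\<lfloor>x\<rfloor> + int m * \<lfloor>real q * \<alpha>\<rfloor>)"
      by (simp add: \<theta>_def frac_def algebra_simps)
    then have "frac (x + real (m*q) * \<alpha>) = frac (frac x + real m * \<theta>)" by (metis frac_add_of_int_right)
    also have "\<dots> = frac x + real m * \<theta> - 1"
      using A th frac_lt_1[of "real q * \<alpha>"] unfolding \<theta>_def[symmetric] by (subst frac_unique_iff) (auto intro: Ints_1 Ints_diff simp: Ints_def)
    finally have "frac (x + real (m*q) * \<alpha>) < \<epsilon>" using A th by linarith
    then show ?thesis using dM by blast
  qed
  ultimately show ?thesis by blast
qed


lemma LL_frac: "frac y = frac z \<Longrightarrow> LL \<alpha> y = LL \<alpha> z"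
  by (simp add: LL_def)

lemma finite_S: "finite {v. length v = m \<and> is_factor w v \<and> abelian_square v}"
proof (rule finite_subset)
  show "{v. length v = m \<and> is_factor w v \<and> abelian_square v} \<subseteq> {xs. set xs \<subseteq> {a,b} \<and> length xs = m}"
    using letter.exhaust by blast
  show "finite {xs. set xs \<subseteq> {a,b} \<and> length xs = m}" by (rule finite_lists_length_eq) simp
qed

lemma key:
  fixes \<alpha> \<rho> :: real and w :: "nat \<Rightarrow> letter" and k :: nat
  assumes "0 < \<alpha>" "\<alpha> < 1" "\<alpha> \<notin> \<rat>"
    and wdef: "w = sturmian_lower \<alpha> \<rho> \<or> w = sturmian_upper \<alpha> \<rho>"
    and fk: "frac (real k * \<alpha>) < 1/4"
  shows "card {l::nat. l \<le> 2*k \<and> 1/2 \<le> frac (real l * \<alpha>)} \<le> ASF w (2*k)"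
proof -
  define E where "E n = \<lfloor>(of_int n :: real) * \<alpha>\<rfloor>" for n :: int
  define D where "D = {-2*int k..2*int k}"
  define \<delta> where "\<delta> = Min ((\<lambda>n. 1 - frac (of_int n * \<alpha>)) ` D)"
  have "finite D" "D \<noteq> {}" by (auto simp: D_def)
  then have \<delta>pos: "0 < \<delta>" unfolding \<delta>_def by (subst Min_gr_iff) (auto simp: frac_lt_1)
  have \<delta>le: "\<delta> \<le> 1 - frac (of_int n * \<alpha>)" if "n \<in> D" for n
    unfolding \<delta>_def using \<open>finite D\<close> that by (intro Min_le) auto
  define Lset where "Lset = {l::nat. l \<le> 2*k \<and> 1/2 \<le> frac (real l * \<alpha>)}"
  define r where "r l = int l - 2*int k" for l :: nat
  obtain M where M: "M > 0" "\<And>x. \<exists>d<M. frac (x + real d * \<alpha>) < \<delta>/2"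
    using window[OF assms(3), of "\<delta>/2"] \<delta>pos by auto
  have ex: "\<exists>i. frac (of_int (r l) * \<alpha>) < frac (\<rho> + real i * \<alpha>) \<and>
                frac (\<rho> + real i * \<alpha>) < frac (of_int (r l) * \<alpha>) + \<delta>" if "l \<in> Lset" for l
  proof -
    define q where "q = frac (of_int (r l) * \<alpha>)"
    have "r l \<in> D" using that by (auto simp: r_def D_def Lset_def)
    then have qd: "q + \<delta> \<le> 1" using \<delta>le unfolding q_def by force
    have q0: "0 \<le> q" by (simp add: q_def)
    obtain d where d: "frac ((\<rho> - q - \<delta>/2) + real d * \<alpha>) < \<delta>/2" using M(2) by blast
    define s where "s = frac ((\<rho> - q - \<delta>/2) + real d * \<alpha>)"
    have s0: "0 \<le> s" by (simp add: s_def)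
    have "\<rho> + real d * \<alpha> = (s + q + \<delta>/2) + of_int \<lfloor>(\<rho> - q - \<delta>/2) + real d * \<alpha>\<rfloor>"
      by (simp add: s_def frac_def)
    then have "frac (\<rho> + real d * \<alpha>) = frac (s + q + \<delta>/2)" by (metis frac_add_of_int_right)
    also have "\<dots> = s + q + \<delta>/2" using s0 q0 qd d \<delta>pos unfolding s_def[symmetric]
      by (intro frac_eq_id) auto
    finally have "frac (\<rho> + real d * \<alpha>) = s + q + \<delta>/2" .
    then show ?thesis using s0 d \<delta>pos unfolding s_def[symmetric] q_def[symmetric]
      by (intro exI[of _ d]) auto
  qed
  then obtain pos where pos: "\<And>l. l \<in> Lset \<Longrightarrow> frac (of_int (r l) * \<alpha>) < frac (\<rho> + real (pos l) * \<alpha>) \<and>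
                frac (\<rho> + real (pos l) * \<alpha>) < frac (of_int (r l) * \<alpha>) + \<delta>"
    by metis
  define fac where "fac l = map (\<lambda>j. w (pos l + j)) [0..<2*k]" for l
  have C: "int (count_list (take j (fac l)) a) = E (r l + int j) - E (r l)"
    if l: "l \<in> Lset" and j: "j \<le> 2*k" for l j
  proof -
    define t where "t = frac (\<rho> + real (pos l) * \<alpha>)"
    define q where "q = frac (of_int (r l) * \<alpha>)"
    have tq: "q < t" "t < q + \<delta>" using pos[OF l] by (auto simp: t_def q_def)
    have P: "frac (t + real j' * \<alpha>) = frac (of_int (r l + int j') * \<alpha>) + (t - q) \<and>
             \<lfloor>t + real j' * \<alpha>\<rfloor> = E (r l + int j') - E (r l)" if "j' \<le> 2*k" for j'
    proof -
      define u where "u = frac (of_int (r l + int j') * \<alpha>) + (t - q)"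
      have "r l + int j' \<in> D" using l that by (auto simp: r_def D_def Lset_def)
      then have "u < 1" using \<delta>le tq unfolding u_def by force
      have "0 < u" using tq frac_ge_0[of "of_int (r l + int j') * \<alpha>"] unfolding u_def by linarith
      have eq: "t + real j' * \<alpha> = u + of_int (E (r l + int j') - E (r l))"
        by (simp add: u_def q_def E_def frac_def algebra_simps)
      have f1: "frac (t + real j' * \<alpha>) = u" unfolding eq using \<open>u<1\<close> \<open>0<u\<close>
          by (simp only: frac_add_of_int_right) simp
      have f2: "\<lfloor>t + real j' * \<alpha>\<rfloor> = E (r l + int j') - E (r l)" unfolding eq using \<open>u<1\<close> \<open>0<u\<close>
          by (metis floor_add_int add.commute floor_eq_iff less_le_not_le of_int_0 add_0 add.right_neutral)
      show ?thesis using f1 f2 unfolding u_def by simp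
    qed
    have Ppos: "0 < frac (t + real j' * \<alpha>)" if "j' \<le> 2*k" for j'
      using P[OF that] tq frac_ge_0[of "of_int (r l + int j') * \<alpha>"] by linarith
    have wj: "w (pos l + j') = LL \<alpha> (t + real j' * \<alpha>)" if "j' < 2*k" for j'
    proof -
      have eq: "\<rho> + real (pos l + j') * \<alpha> = (t + real j' * \<alpha>) + of_int \<lfloor>\<rho> + real (pos l) * \<alpha>\<rfloor>"
        by (simp add: t_def frac_def algebra_simps)
      have ff: "frac (\<rho> + real (pos l + j') * \<alpha>) = frac (t + real j' * \<alpha>)"
        unfolding eq by (rule frac_add_of_int_right)
      have n0: "frac (t + real j' * \<alpha>) \<noteq> 0" using Ppos[of j'] that by simp
      have n1: "frac (t + real j' * \<alpha>) \<noteq> 1 - \<alpha>"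
      proof
        assume h: "frac (t + real j' * \<alpha>) = 1 - \<alpha>"
        have "t + real (Suc j') * \<alpha> = of_int (\<lfloor>t + real j' * \<alpha>\<rfloor> + 1)"
          using h by (simp add: frac_def algebra_simps)
        then have "frac (t + real (Suc j') * \<alpha>) = 0" by (metis frac_of_int)
        with Ppos[of "Suc j'"] that show False by simp
      qed
      have "w (pos l + j') = LL \<alpha> (\<rho> + real (pos l + j') * \<alpha>)"
        using w_eq[OF wdef] n0 n1 ff by metis
      also have "\<dots> = LL \<alpha> (t + real j' * \<alpha>)" by (rule LL_frac[OF ff])
      finally show ?thesis .
    qed
    have "take j (fac l) = map (\<lambda>j'. LL \<alpha> (t + real j' * \<alpha>)) [0..<j]"
      unfolding fac_def using j wj by (simp add: take_map min_def)
    then have "int (count_list (take j (fac l)) a) = \<lfloor>t + real j * \<alpha>\<rfloor> - \<lfloor>t\<rfloor>"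
      using LL_count[OF assms(1,2)] by simp
    moreover have "\<lfloor>t\<rfloor> = 0" by (simp add: t_def floor_eq_iff frac_lt_1)
    ultimately show ?thesis using P[OF j] by simp
  qed
  have fac_len: "length (fac l) = 2*k" for l by (simp add: fac_def)
  have AB: "abelian_square (fac l)" if l: "l \<in> Lset" for l
  proof -
    have lk: "l \<le> 2*k" "1/2 \<le> frac (real l * \<alpha>)" using l by (auto simp: Lset_def)
    have e1: "E (int l - int k) = E (int l) - E (int k)"
    proof -
      have "E (int l - int k) = \<lfloor>real l * \<alpha> - real k * \<alpha>\<rfloor>" by (simp add: E_def algebra_simps)
      also have "\<dots> = \<lfloor>real l * \<alpha>\<rfloor> - \<lfloor>real k * \<alpha>\<rfloor>" using fk lk by (intro floor_diff_le) linarith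
      finally show ?thesis by (simp add: E_def)
    qed
    have e2: "E (int l - 2*int k) = E (int l) - 2 * E (int k)"
    proof -
      have fd: "frac (real l * \<alpha> - real k * \<alpha>) = frac (real l * \<alpha>) - frac (real k * \<alpha>)"
        using fk lk by (intro frac_diff_pos) linarith
      have "E (int l - 2*int k) = \<lfloor>(real l * \<alpha> - real k * \<alpha>) - real k * \<alpha>\<rfloor>" by (simp add: E_def algebra_simps)
      also have "\<dots> = \<lfloor>real l * \<alpha> - real k * \<alpha>\<rfloor> - \<lfloor>real k * \<alpha>\<rfloor>" using fk lk fd by (intro floor_diff_le) linarith
      also have "\<lfloor>real l * \<alpha> - real k * \<alpha>\<rfloor> = \<lfloor>real l * \<alpha>\<rfloor> - \<lfloor>real k * \<alpha>\<rfloor>" using fk lk by (intro floor_diff_le) linarith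
      finally show ?thesis by (simp add: E_def)
    qed
    have rr: "r l + int k = int l - int k" "r l + int (2*k) = int l" "r l = int l - 2*int k"
      by (auto simp: r_def)
    have c1: "int (count_list (take k (fac l)) a) = E (int l - int k) - E (int l - 2*int k)"
      using C[OF l, of k] unfolding rr by simp
    have c2: "int (count_list (take (2*k) (fac l)) a) = E (int l) - E (int l - 2*int k)"
      using C[OF l, of "2*k"] unfolding rr by simp
    have "count_list (fac l) a = count_list (take k (fac l)) a + count_list (drop k (fac l)) a"
      by (metis append_take_drop_id count_list_append)
    moreover have "take (2*k) (fac l) = fac l" using fac_len by simp
    ultimately have "int (count_list (take k (fac l)) a) = int (count_list (drop k (fac l)) a)"
      using c1 c2 e1 e2 by simp
    then have "count_list (take k (fac l)) a = count_list (drop k (fac l)) a" by simp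
    then show ?thesis by (rule abelian_sq_intro[OF fac_len])
  qed
  have inj: "inj_on fac Lset"
  proof (rule inj_onI)
    fix l l' assume l: "l \<in> Lset" and l': "l' \<in> Lset" and eq: "fac l = fac l'"
    show "l = l'"
    proof (rule ccontr)
      assume ne: "l \<noteq> l'"
      have j1: "2*k - l \<le> 2*k" "2*k - l' \<le> 2*k" by auto
      have h1: "E (r l + int (2*k - l)) - E (r l) = E (r l' + int (2*k - l)) - E (r l')"
        using C[OF l j1(1)] C[OF l' j1(1)] eq by simp
      have h2: "E (r l + int (2*k - l')) - E (r l) = E (r l' + int (2*k - l')) - E (r l')"
        using C[OF l j1(2)] C[OF l' j1(2)] eq by simp
      have lk: "l \<le> 2*k" "l' \<le> 2*k" using l l' by (auto simp: Lset_def)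
      have s1: "r l + int (2*k - l) = 0" "r l' + int (2*k - l) = int l' - int l"
          "r l + int (2*k - l') = int l - int l'" "r l' + int (2*k - l') = 0" using lk by (auto simp: r_def)
      have E0: "E 0 = 0" by (simp add: E_def)
      have "E (int l' - int l) + E (int l - int l') = 0" using h1 h2 unfolding s1 E0 by linarith
      moreover have "E (int l' - int l) + E (int l - int l') = -1"
      proof -
        have "of_int (int l' - int l) * \<alpha> \<notin> \<int>" using irr_mult[OF assms(3), of "int l' - int l"] ne by auto
        then have "\<lfloor>of_int (int l' - int l) * \<alpha>\<rfloor> + \<lfloor>-(of_int (int l' - int l) * \<alpha>)\<rfloor> = -1"
          by (rule floor_neg_sum)
        moreover have "-(of_int (int l' - int l) * \<alpha>) = of_int (int l - int l') * (\<alpha>::real)" by (simp add: algebra_simps)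
        ultimately show ?thesis by (simp add: E_def)
      qed
      ultimately show False by simp
    qed
  qed
  have sub: "fac ` Lset \<subseteq> {v. length v = 2*k \<and> is_factor w v \<and> abelian_square v}"
  proof
    fix v assume "v \<in> fac ` Lset"
    then obtain l where l: "l \<in> Lset" "v = fac l" by auto
    have "is_factor w (fac l)" unfolding is_factor_def
      by (rule exI[of _ "pos l"]) (simp add: fac_def)
    then show "v \<in> {v. length v = 2*k \<and> is_factor w v \<and> abelian_square v}"
      using l AB fac_len by auto
  qed
  have "card Lset = card (fac ` Lset)" using card_image[OF inj] by simp
  also have "\<dots> \<le> ASF w (2*k)" unfolding ASF_def by (rule card_mono[OF finite_S sub])
  finally show ?thesis unfolding Lset_def .
qed


lemma sum_2q: "(\<Sum>q<Q. real (2*q)) = real Q * (real Q - 1)"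
  by (induction Q) (auto simp: algebra_simps)

lemma frac_half: assumes "frac (y + 1/2) < 1/4" shows "1/2 \<le> frac (y::real)"
proof -
  define z where "z = y + 1/2"
  have "frac y = frac z + 1/2"
  proof (subst frac_unique_iff, intro conjI)
    have "y - (frac z + 1/2) = of_int (\<lfloor>z\<rfloor> - 1)" by (simp add: z_def frac_def)
    then show "y - (frac z + 1/2) \<in> \<int>" by (metis Ints_of_int)
  qed (use assms z_def in auto)
  then show ?thesis by simp
qed

theorem theorem3:
  fixes \<alpha> \<rho> :: real and w :: "nat \<Rightarrow> letter"
  assumes "0 < \<alpha>" "\<alpha> < 1" "\<alpha> \<notin> \<rat>"
    and "bounded_partial_quotients \<alpha>"
    and "0 \<le> \<rho>" "\<rho> < 1"
    and "w = sturmian_lower \<alpha> \<rho> \<or> w = sturmian_upper \<alpha> \<rho>"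
  shows "\<exists>C > 0. \<exists>N. \<forall>n \<ge> N. (\<Sum>m\<le>n. real (ASF w m)) \<ge> C * (real n)^2"
proof -
  obtain M where M: "M > 0" "\<And>x. \<exists>d<M. frac (x + real d * \<alpha>) < 1/4"
    using window[OF assms(3), of "1/4"] by auto
  have "\<exists>k. q*M \<le> k \<and> k < q*M + M \<and> frac (real k * \<alpha>) < 1/4" for q
  proof -
    obtain d where d: "d < M" "frac (real (q*M) * \<alpha> + real d * \<alpha>) < 1/4" using M(2) by blast
    then show ?thesis by (intro exI[of _ "q*M + d"]) (auto simp: algebra_simps)
  qed
  then obtain kk where kk: "\<And>q. q*M \<le> kk q \<and> kk q < q*M + M \<and> frac (real (kk q) * \<alpha>) < 1/4"
    by metis
  have "\<exists>l. s*M \<le> l \<and> l < s*M + M \<and> 1/2 \<le> frac (real l * \<alpha>)" for s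
  proof -
    obtain d where d: "d < M" "frac ((real (s*M) * \<alpha> + 1/2) + real d * \<alpha>) < 1/4" using M(2) by blast
    have "frac (real (s*M + d) * \<alpha> + 1/2) < 1/4" using d(2) by (simp add: algebra_simps)
    then have "1/2 \<le> frac (real (s*M + d) * \<alpha>)" by (rule frac_half)
    then show ?thesis using d(1) by (intro exI[of _ "s*M + d"]) auto
  qed
  then obtain ll where ll: "\<And>s. s*M \<le> ll s \<and> ll s < s*M + M \<and> 1/2 \<le> frac (real (ll s) * \<alpha>)"
    by metis
  have blk: "x = y" if "x*M \<le> u" "u < x*M + M" "y*M \<le> u" "u < y*M + M" for x y u :: nat
  proof -
    have "x * M < (y + 1) * M" using that by simp
    then have "x < y + 1" by (simp only: mult_less_cancel2)
    moreover have "y * M < (x + 1) * M" using that by simp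
    then have "y < x + 1" by (simp only: mult_less_cancel2)
    ultimately show ?thesis by simp
  qed
  have ASFq: "2*q \<le> ASF w (2 * kk q)" for q
  proof -
    have "ll ` {..<2*q} \<subseteq> {l::nat. l \<le> 2 * kk q \<and> 1/2 \<le> frac (real l * \<alpha>)}"
    proof
      fix l assume "l \<in> ll ` {..<2*q}"
      then obtain s where s: "s < 2*q" "l = ll s" by auto
      have "Suc s \<le> 2*q" using s by simp
      then have "Suc s * M \<le> 2*q*M" by (rule mult_le_mono1)
      then have "l < 2*q*M" using ll[of s] s by simp
      moreover have "2*q*M \<le> 2 * kk q" using kk[of q] by simp
      ultimately show "l \<in> {l::nat. l \<le> 2 * kk q \<and> 1/2 \<le> frac (real l * \<alpha>)}"
        using ll[of s] s by auto
    qed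
    moreover have "inj_on ll {..<2*q}"
    proof (rule inj_onI)
      fix s s' assume "ll s = ll s'"
      then show "s = s'" using blk[of s "ll s" s'] ll[of s] ll[of s'] by simp
    qed
    moreover have "finite {l::nat. l \<le> 2 * kk q \<and> 1/2 \<le> frac (real l * \<alpha>)}" by simp
    ultimately have c1: "card (ll ` {..<2*q}) \<le> card {l::nat. l \<le> 2 * kk q \<and> 1/2 \<le> frac (real l * \<alpha>)}"
      and c2: "card (ll ` {..<2*q}) = 2*q"
      by (metis card_mono, simp add: card_image)
    from c1 c2 have "2*q \<le> card {l::nat. l \<le> 2 * kk q \<and> 1/2 \<le> frac (real l * \<alpha>)}" by simp
    also have "\<dots> \<le> ASF w (2 * kk q)"
      by (rule key[OF assms(1,2,3,7)]) (use kk in blast)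
    finally show ?thesis .
  qed
  define C where "C = 1 / (16 * (real M)^2)"
  have "C > 0" using M by (simp add: C_def)
  moreover have "\<forall>n \<ge> 8*M. (\<Sum>m\<le>n. real (ASF w m)) \<ge> C * (real n)^2"
  proof (intro allI impI)
    fix n assume n: "8*M \<le> n"
    define Q where "Q = n div (2*M)"
    have injk: "inj_on (\<lambda>q. 2 * kk q) {..<Q}"
    proof (rule inj_onI)
      fix s s' assume "2 * kk s = 2 * kk s'"
      then have "kk s = kk s'" by simp
      then show "s = s'" using blk[of s "kk s" s'] kk[of s] kk[of s'] by simp
    qed
    have imgsub: "(\<lambda>q. 2 * kk q) ` {..<Q} \<subseteq> {..n}"
    proof
      fix m assume "m \<in> (\<lambda>q. 2 * kk q) ` {..<Q}"
      then obtain q where q: "q < Q" "m = 2 * kk q" by auto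
      have "Suc q * M \<le> Q * M" using q by (intro mult_le_mono1) simp
      then have "kk q < Q * M" using kk[of q] by simp
      moreover have "Q * (2*M) \<le> n" unfolding Q_def using div_mult_mod_eq[of n "2*M"] by linarith
      ultimately show "m \<in> {..n}" using q by simp
    qed
    have "(\<Sum>q<Q. real (2*q)) \<le> (\<Sum>q<Q. real (ASF w (2 * kk q)))"
      by (intro sum_mono) (simp only: of_nat_le_iff ASFq)
    also have "\<dots> = (\<Sum>m\<in>(\<lambda>q. 2 * kk q) ` {..<Q}. real (ASF w m))"
      by (simp add: sum.reindex[OF injk])
    also have "\<dots> \<le> (\<Sum>m\<le>n. real (ASF w m))"
      by (rule sum_mono2[OF _ imgsub]) auto
    finally have S0: "(\<Sum>q<Q. real (2*q)) \<le> (\<Sum>m\<le>n. real (ASF w m))" .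
    then have S: "real Q * (real Q - 1) \<le> (\<Sum>m\<le>n. real (ASF w m))" by (simp only: sum_2q)
    have "n = Q * (2*M) + n mod (2*M)" unfolding Q_def by (rule div_mult_mod_eq[symmetric])
    moreover have "n mod (2*M) < 2*M" using M by simp
    ultimately have "n < (Q + 1) * (2*M)" by (simp add: algebra_simps)
    then have "real n < real ((Q + 1) * (2*M))" by (simp only: of_nat_less_iff)
    then have "real n < (real Q + 1) * (2 * real M)" by (simp add: algebra_simps)
    then have Qb: "real n / (2 * real M) - 1 < real Q" using M by (simp add: field_simps)
    have nb: "8 * real M \<le> real n" using n by simp
    have X: "real n / (4 * real M) \<le> real Q - 1"
    proof -
      have "real n / (2 * real M) = 2 * (real n / (4 * real M))" using M by (simp add: field_simps)
      moreover have "2 \<le> real n / (4 * real M)" using nb M by (simp add: field_simps)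
      ultimately show ?thesis using Qb by linarith
    qed
    have X0: "0 \<le> real n / (4 * real M)" by simp
    have "C * (real n)^2 = (real n / (4 * real M)) * (real n / (4 * real M))"
      using M by (simp add: C_def field_simps power2_eq_square)
    also have "\<dots> \<le> real Q * (real Q - 1)"
      using X X0 by (intro mult_mono) auto
    finally show "C * (real n)^2 \<le> (\<Sum>m\<le>n. real (ASF w m))" using S by linarith
  qed
  ultimately show ?thesis by blast
qed

end
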